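(* Let $e\in\,]0,1[$ and define $U:[0,1]^2\to[0,1]$ by $$U(x,y)=\begin{cases}1 & \max(x,y)=1,\\ \max(x,y) & x,y\in\,]e,1[,\\ 0 & x,y\in[0,e[,\\ x & y=e,\\ y & x=e,\\ \min(x,y) & \text{otherwise.}\end{cases}$$ Then $U$ is a disjunctive uninorm with neutral element $e$, and for every $\alpha\in\,]0,1[$ with $\alpha\ne e$ the cut $U(\cdot,\alpha)$ is not a continuous function with range $[0,1]$. Consequently, for every continuous fuzzy negation $N$, the function $I(x,y)=U(N(x),y)$ has a unique representation as a $(U,N)$-implication with a continuous fuzzy negation: if $U'$ is a disjunctive uninorm with neutral element in $]0,1[$ and $N'$ is a continuous fuzzy negation with $U'(N'(x),y)=I(x,y)$ for all $x,y$, then $U'=U$ and $N'=N$.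
   Context: A fuzzy negation is a non-increasing map $N:[0,1]\to[0,1]$ with $N(0)=1$, $N(1)=0$. A uninorm is a map $U:[0,1]^2\to[0,1]$ that is commutative, associative, non-decreasing in each variable, and has a neutral element $e\in[0,1]$. A uninorm is disjunctive if $U(1,0)=1$. *)

theory Defs
  imports "HOL-Analysis.Analysis"
begin

definition fuzzy_negation :: "(real \<Rightarrow> real) \<Rightarrow> bool" where
  "fuzzy_negation N \<longleftrightarrow>
     (\<forall>x\<in>{0..1}. N x \<in> {0..1}) \<and>
     (\<forall>x\<in>{0..1}. \<forall>y\<in>{0..1}. x \<le> y \<longrightarrow> N y \<le> N x) \<and>
     N 0 = 1 \<and> N 1 = 0"

definition uninorm :: "(real \<Rightarrow> real \<Rightarrow> real) \<Rightarrow> real \<Rightarrow> bool" where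
  "uninorm U e \<longleftrightarrow>
     e \<in> {0..1} \<and>
     (\<forall>x\<in>{0..1}. \<forall>y\<in>{0..1}. U x y \<in> {0..1}) \<and>
     (\<forall>x\<in>{0..1}. \<forall>y\<in>{0..1}. U x y = U y x) \<and>
     (\<forall>x\<in>{0..1}. \<forall>y\<in>{0..1}. \<forall>z\<in>{0..1}. U (U x y) z = U x (U y z)) \<and>
     (\<forall>x\<in>{0..1}. \<forall>y\<in>{0..1}. \<forall>z\<in>{0..1}. x \<le> y \<longrightarrow> U x z \<le> U y z) \<and>
     (\<forall>x\<in>{0..1}. U e x = x)"

definition disjunctive :: "(real \<Rightarrow> real \<Rightarrow> real) \<Rightarrow> bool" where
  "disjunctive U \<longleftrightarrow> U 1 0 = 1"

definition Ue :: "real \<Rightarrow> real \<Rightarrow> real \<Rightarrow> real" where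
  "Ue e x y =
     (if max x y = 1 then 1
      else if e < x \<and> x < 1 \<and> e < y \<and> y < 1 then max x y
      else if 0 \<le> x \<and> x < e \<and> 0 \<le> y \<and> y < e then 0
      else if y = e then x
      else if x = e then y
      else min x y)"

end

theory Submission
  imports Defs
begin

context fixes e :: real assumes e0: "0<e" and e1: "e<1"
begin
lemma U1l: "y \<le> 1 \<Longrightarrow> Ue e 1 y = 1" unfolding Ue_def by (simp add: max_def)
lemma U1r: "x \<le> 1 \<Longrightarrow> Ue e x 1 = 1" unfolding Ue_def by (simp add: max_def)
lemma Uel: "y \<le> 1 \<Longrightarrow> Ue e e y = y" using e1 unfolding Ue_def by (auto simp add: max_def)
lemma Uer: "x \<le> 1 \<Longrightarrow> Ue e x e = x" using e1 unfolding Ue_def by (auto simp add: max_def)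
lemma ULL: "0 \<le> x \<Longrightarrow> x < e \<Longrightarrow> 0 \<le> y \<Longrightarrow> y < e \<Longrightarrow> Ue e x y = 0"
  using e1 unfolding Ue_def by (auto simp add: max_def)
lemma UHH: "e < x \<Longrightarrow> x < 1 \<Longrightarrow> e < y \<Longrightarrow> y < 1 \<Longrightarrow> Ue e x y = max x y"
  using e1 unfolding Ue_def by (auto simp add: max_def)
lemma ULH: "0 \<le> x \<Longrightarrow> x < e \<Longrightarrow> e < y \<Longrightarrow> y < 1 \<Longrightarrow> Ue e x y = x"
  using e1 unfolding Ue_def by (auto simp add: max_def min_def)
lemma UHL: "0 \<le> y \<Longrightarrow> y < e \<Longrightarrow> e < x \<Longrightarrow> x < 1 \<Longrightarrow> Ue e x y = y"
  using e1 unfolding Ue_def by (auto simp add: max_def min_def)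

lemma cases4: "x\<in>{0..1} \<Longrightarrow> (0\<le>x \<Longrightarrow> x<e \<Longrightarrow> P) \<Longrightarrow> (x=e \<Longrightarrow> P) \<Longrightarrow> (e<x \<Longrightarrow> x<1 \<Longrightarrow> P) \<Longrightarrow> (x=1 \<Longrightarrow> P) \<Longrightarrow> P"
  by force

lemmas Us = U1l U1r Uel Uer ULL UHH ULH UHL

lemma Ue_assoc: assumes "x\<in>{0..1}" "y\<in>{0..1}" "z\<in>{0..1}"
 shows "Ue e (Ue e x y) z = Ue e x (Ue e y z)"
  apply (rule cases4[OF assms(1)]; rule cases4[OF assms(2)]; rule cases4[OF assms(3)])
  using e0 e1 by (simp_all add: Us max_def)

lemma Ue_comm: assumes "x\<in>{0..1}" "y\<in>{0..1}"
 shows "Ue e x y = Ue e y x"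
  apply (rule cases4[OF assms(1)]; rule cases4[OF assms(2)])
  using e0 e1 by (simp_all add: Us max_def)

lemma Ue_mono: assumes "x\<in>{0..1}" "y\<in>{0..1}" "z\<in>{0..1}" "x \<le> y"
 shows "Ue e x z \<le> Ue e y z"
  apply (rule cases4[OF assms(1)]; rule cases4[OF assms(2)]; rule cases4[OF assms(3)])
  using e0 e1 assms(4) by (auto simp add: Us max_def)

lemma Ue_range: assumes "x\<in>{0..1}" "y\<in>{0..1}"
 shows "Ue e x y \<in> {0..1}"
  apply (rule cases4[OF assms(1)]; rule cases4[OF assms(2)])
  using e0 e1 by (auto simp add: Us max_def)

lemma not_e: assumes "x\<in>{0..1}" "0<a" "a<1" "a\<noteq>e"
 shows "Ue e x a \<noteq> e"
proof -
  have "a\<in>{0..1}" using assms by auto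
  show ?thesis
  apply (rule cases4[OF assms(1)]; rule cases4[OF \<open>a\<in>{0..1}\<close>])
  using e0 e1 assms by (auto simp add: Us max_def)
qed

lemma surj01: assumes "fuzzy_negation N" "continuous_on {0..1} N" "a \<in> {0..1}"
  shows "\<exists>x\<in>{0..1}. N x = a"
proof -
  have "N 1 \<le> a" "a \<le> N 0" using assms unfolding fuzzy_negation_def by auto
  from IVT2'[OF this _ assms(2)] show ?thesis by auto
qed

end

theorem mainTheorem6:
  fixes e :: real
  assumes "0 < e" and "e < 1"
  shows "uninorm (Ue e) e \<and> disjunctive (Ue e)
    \<and> (\<forall>\<alpha>. 0 < \<alpha> \<and> \<alpha> < 1 \<and> \<alpha> \<noteq> e \<longrightarrow>
          \<not> (continuous_on {0..1} (\<lambda>x. Ue e x \<alpha>) \<and> (\<lambda>x. Ue e x \<alpha>) ` {0..1} = {0..1}))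
    \<and> (\<forall>N. fuzzy_negation N \<and> continuous_on {0..1} N \<longrightarrow>
          (\<forall>U' e' N'. uninorm U' e' \<and> 0 < e' \<and> e' < 1 \<and> disjunctive U'
              \<and> fuzzy_negation N' \<and> continuous_on {0..1} N'
              \<and> (\<forall>x\<in>{0..1}. \<forall>y\<in>{0..1}. U' (N' x) y = Ue e (N x) y)
            \<longrightarrow> (\<forall>x\<in>{0..1}. \<forall>y\<in>{0..1}. U' x y = Ue e x y)
                \<and> (\<forall>x\<in>{0..1}. N' x = N x)))"
proof (intro conjI allI impI)
  show "uninorm (Ue e) e" unfolding uninorm_def
    using Ue_range[OF assms] Ue_comm[OF assms] Ue_assoc[OF assms] Ue_mono[OF assms] Uel[OF assms] Uer[OF assms] assms
    by auto
  show "disjunctive (Ue e)" unfolding disjunctive_def using U1l[OF assms] by simp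
next
  fix a assume a: "0 < a \<and> a < 1 \<and> a \<noteq> e"
  have "e \<notin> (\<lambda>x. Ue e x a) ` {0..1}" 
  proof
    assume "e \<in> (\<lambda>x. Ue e x a) ` {0..1}"
    then obtain x where "x \<in> {0..1}" "Ue e x a = e" by auto
    with not_e[OF assms this(1)] a show False by blast
  qed
  moreover have "e \<in> {0..1::real}" using assms by auto
  ultimately show "\<not> (continuous_on {0..1} (\<lambda>x. Ue e x a) \<and> (\<lambda>x. Ue e x a) ` {0..1} = {0..1})"
    by auto
next
  fix N U' e' N'
  assume N: "fuzzy_negation N \<and> continuous_on {0..1} N"
  assume H: "uninorm U' e' \<and> 0 < e' \<and> e' < 1 \<and> disjunctive U'
              \<and> fuzzy_negation N' \<and> continuous_on {0..1} N'
              \<and> (\<forall>x\<in>{0..1}. \<forall>y\<in>{0..1}. U' (N' x) y = Ue e (N x) y)"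
  have Nr: "\<And>x. x \<in> {0..1} \<Longrightarrow> N x \<in> {0..1}" using N unfolding fuzzy_negation_def by auto
  have N'r: "\<And>x. x \<in> {0..1} \<Longrightarrow> N' x \<in> {0..1}" using H unfolding fuzzy_negation_def by auto
  have eq: "\<And>x y. x \<in> {0..1} \<Longrightarrow> y \<in> {0..1} \<Longrightarrow> U' (N' x) y = Ue e (N x) y" using H by auto
  have neut: "\<And>x. x \<in> {0..1} \<Longrightarrow> U' x e' = x"
    using H unfolding uninorm_def by auto
  have e'01: "e' \<in> {0..1}" using H by auto
  have e01: "e \<in> {0..1}" using assms by auto
  have ee: "e' = e"
  proof (rule ccontr)
    assume ne: "e' \<noteq> e"
    obtain x where x: "x \<in> {0..1}" "N' x = e" using surj01[OF assms, where N=N' and a=e] H e01 by auto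
    have "Ue e (N x) e' = e" using eq[OF x(1) e'01] neut[OF e01] x by simp
    moreover have "Ue e (N x) e' \<noteq> e" using not_e[OF assms Nr[OF x(1)]] H ne by auto
    ultimately show False by simp
  qed
  have NN: "\<And>x. x \<in> {0..1} \<Longrightarrow> N' x = N x"
  proof -
    fix x :: real assume x: "x \<in> {0..1}"
    have "N' x = U' (N' x) e'" using neut[OF N'r[OF x]] by simp
    also have "\<dots> = Ue e (N x) e" using eq[OF x e'01] ee by simp
    also have "\<dots> = N x" using Uer[OF assms] Nr[OF x] by auto
    finally show "N' x = N x" .
  qed
  then show "\<forall>x\<in>{0..1}. N' x = N x" by auto
  show "\<forall>x\<in>{0..1}. \<forall>y\<in>{0..1}. U' x y = Ue e x y"
  proof (intro ballI)
    fix a y :: real assume a: "a \<in> {0..1}" and y: "y \<in> {0..1}"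
    obtain x where x: "x \<in> {0..1}" "N' x = a" using surj01[OF assms, where N=N' and a=a] H a by auto
    have "U' a y = Ue e (N x) y" using eq[OF x(1) y] x by simp
    also have "\<dots> = Ue e a y" using NN[OF x(1)] x by simp
    finally show "U' a y = Ue e a y" .
  qed
qed

end
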